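(* Let $n$ entities move in $\mathbb{R}^1$ along piecewise-linear trajectories $\sigma:[t_0,t_\tau]\to\mathbb{R}$ whose vertices are all at the common times $t_0<t_1<\dots<t_\tau$. Let $\mathcal{U}(t)=\max_\sigma \sigma(t)$, $\mathcal{L}(t)=\min_\sigma\sigma(t)$ and $\mathcal{I}(t)=(\mathcal{U}(t)+\mathcal{L}(t))/2$. Subdivide each interval $[t_i,t_{i+1}]$ into maximal subintervals (elementary intervals) on which $\mathcal{I}$ is a single linear function. Then the total number of elementary intervals over all of $[t_0,t_\tau]$ is at most $\tau(n+2)$.
   Context: $\mathcal{I}$ is called the ideal trajectory; it is the pointwise midpoint of the highest and lowest entity. *)

theory Defs
  imports Complex_Main
begin

definition affine_on :: "(real \<Rightarrow> real) \<Rightarrow> real set \<Rightarrow> bool" where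
  "affine_on f S \<longleftrightarrow> (\<exists>c d. \<forall>x\<in>S. f x = c * x + d)"

definition upper_env :: "nat \<Rightarrow> (nat \<Rightarrow> real \<Rightarrow> real) \<Rightarrow> real \<Rightarrow> real" where
  "upper_env n traj x = Max ((\<lambda>k. traj k x) ` {..<n})"

definition lower_env :: "nat \<Rightarrow> (nat \<Rightarrow> real \<Rightarrow> real) \<Rightarrow> real \<Rightarrow> real" where
  "lower_env n traj x = Min ((\<lambda>k. traj k x) ` {..<n})"

definition ideal_traj :: "nat \<Rightarrow> (nat \<Rightarrow> real \<Rightarrow> real) \<Rightarrow> real \<Rightarrow> real" where
  "ideal_traj n traj x = (upper_env n traj x + lower_env n traj x) / 2"

text \<open>Number of elementary intervals of \<open>f\<close> on \<open>[a,b]\<close>: the number of maximal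
  subintervals on which \<open>f\<close> is a single linear function, i.e. the least number
  of pieces of a subdivision \<open>a = s 0 < s 1 < ... < s k = b\<close> such that \<open>f\<close> is
  affine on every piece.\<close>
definition elem_intervals :: "(real \<Rightarrow> real) \<Rightarrow> real \<Rightarrow> real \<Rightarrow> nat" where
  "elem_intervals f a b = (LEAST k. \<exists>s::nat \<Rightarrow> real.
      s 0 = a \<and> s k = b \<and> (\<forall>j<k. s j < s (Suc j)) \<and>
      (\<forall>j<k. affine_on f {s j..s (Suc j)}))"

end

theory Submission
  imports Defs
begin

definition isMax :: "nat \<Rightarrow> (nat \<Rightarrow> real) \<Rightarrow> (nat \<Rightarrow> real) \<Rightarrow> real \<Rightarrow> nat \<Rightarrow> bool" where
  "isMax n c d x i \<longleftrightarrow> i < n \<and> (\<forall>j<n. c j * x + d j \<le> c i * x + d i)"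

definition bad :: "nat \<Rightarrow> (nat \<Rightarrow> real) \<Rightarrow> (nat \<Rightarrow> real) \<Rightarrow> real \<Rightarrow> bool" where
  "bad n c d x \<longleftrightarrow> (\<exists>i j. isMax n c d x i \<and> isMax n c d x j \<and> c i \<noteq> c j)"

lemma affine_le_ends:
  fixes al be m z x :: real
  assumes "al * m + be \<le> 0" "al * z + be \<le> 0" "m \<le> x" "x \<le> z"
  shows "al * x + be \<le> 0"
proof (cases "al \<ge> 0")
  case True
  then have "al * x \<le> al * z" using assms by (simp add: mult_left_mono)
  then show ?thesis using assms by linarith
next
  case False
  then have "al * x \<le> al * m" using assms by (simp add: mult_left_mono_neg)
  then show ?thesis using assms by linarith
qed

lemma prop_right:
  assumes gm: "isMax n c d m g" and mz: "m < z"
    and nb: "\<forall>x. m \<le> x \<and> x < z \<longrightarrow> \<not> bad n c d x"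
  shows "isMax n c d z g"
proof (rule ccontr)
  assume nz: "\<not> isMax n c d z g"
  define K where "K = {k. k<n \<and> c g * z + d g < c k * z + d k}"
  have g: "g < n" and gm': "\<forall>j<n. c j*m + d j \<le> c g*m+d g" using gm by (auto simp: isMax_def)
  have Kne: "K \<noteq> {}" using nz g unfolding isMax_def K_def by (auto simp: not_le)
  have finK: "finite K" by (simp add: K_def)
  define xc where "xc k = (d g - d k)/(c k - c g)" for k
  have slope: "c k > c g" if "k\<in>K" for k
  proof (rule ccontr)
    assume "\<not> c k > c g"
    then have "(c k - c g) * (z - m) \<le> 0" using mz by (simp add: mult_nonpos_nonneg)
    moreover have "c g * z + d g < c k * z + d k" "c k*m + d k \<le> c g*m+d g" using that gm' by (auto simp: K_def)
    ultimately show False by (simp add: algebra_simps)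
  qed
  obtain k0 where k0: "k0 \<in> K" "xc k0 = Min (xc ` K)"
  proof -
    have "Min (xc ` K) \<in> xc ` K" using finK Kne by (intro Min_in) auto
    then show ?thesis using that by auto
  qed
  have k0min: "xc k0 \<le> xc k" if "k \<in> K" for k using k0 finK that by simp
  define x0 where "x0 = xc k0"
  have s0: "c k0 - c g > 0" using slope k0 by simp
  have k0n: "k0 < n" "c g * z + d g < c k0 * z + d k0" using k0 by (auto simp: K_def)
  have eq0: "c k0 * x0 + d k0 = c g * x0 + d g"
  proof -
    have "(c k0 - c g) * x0 = d g - d k0" using s0 by (simp add: x0_def xc_def)
    then show ?thesis by (simp add: algebra_simps)
  qed
  have "(c k0 - c g) * m \<le> d g - d k0" using gm' k0n by (simp add: algebra_simps)
  then have mx0: "m \<le> x0" using s0 by (simp add: x0_def xc_def pos_le_divide_eq mult.commute)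
  have "(c k0 - c g) * z > d g - d k0" using k0n by (simp add: algebra_simps)
  then have x0z: "x0 < z" using s0 by (simp add: x0_def xc_def divide_less_eq mult.commute)
  have allle: "c j * x0 + d j \<le> c g * x0 + d g" if j: "j < n" for j
  proof (cases "j \<in> K")
    case True
    have sj: "c j - c g > 0" using slope True by simp
    have "x0 \<le> xc j" using k0min True by (simp add: x0_def)
    then have "(c j - c g) * x0 \<le> d g - d j" using sj by (simp add: xc_def pos_le_divide_eq mult.commute)
    then show ?thesis by (simp add: algebra_simps)
  next
    case False
    then have "(c j - c g) * z + (d j - d g) \<le> 0" using j by (auto simp: K_def algebra_simps)
    moreover have "(c j - c g) * m + (d j - d g) \<le> 0" using gm' j by (auto simp: algebra_simps)
    ultimately have "(c j - c g) * x0 + (d j - d g) \<le> 0"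
      using affine_le_ends[of "c j - c g" m "d j - d g" z x0] mx0 x0z by simp
    then show ?thesis by (simp add: algebra_simps)
  qed
  have "bad n c d x0"
    unfolding bad_def
  proof (intro exI conjI)
    show "isMax n c d x0 g" using allle g by (simp add: isMax_def)
    show "isMax n c d x0 k0" using allle k0n eq0 by (simp add: isMax_def)
    show "c g \<noteq> c k0" using s0 by simp
  qed
  then show False using nb mx0 x0z by blast
qed

lemma isMax_refl: "isMax n c d x i \<longleftrightarrow> isMax n (\<lambda>k. - c k) d (-x) i"
  by (simp add: isMax_def)

lemma bad_refl: "bad n c d x \<longleftrightarrow> bad n (\<lambda>k. - c k) d (-x)"
  by (simp add: bad_def isMax_refl[of n c d x])

lemma prop_left:
  assumes gm: "isMax n c d m g" and mz: "z < m"
    and nb: "\<forall>x. z < x \<and> x \<le> m \<longrightarrow> \<not> bad n c d x"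
  shows "isMax n c d z g"
proof -
  have "isMax n (\<lambda>k. - c k) d (-z) g"
  proof (rule prop_right)
    show "isMax n (\<lambda>k. - c k) d (-m) g" using gm isMax_refl by blast
    show "-m < -z" using mz by simp
    show "\<forall>x. - m \<le> x \<and> x < - z \<longrightarrow> \<not> bad n (\<lambda>k. - c k) d x"
    proof (intro allI impI)
      fix x assume "- m \<le> x \<and> x < - z"
      then have "\<not> bad n c d (-x)" using nb by auto
      then show "\<not> bad n (\<lambda>k. - c k) d x" using bad_refl[of n c d "-x"] by simp
    qed
  qed
  then show ?thesis using isMax_refl by blast
qed

lemma ex_isMax:
  assumes "0 < n" shows "\<exists>i. isMax n c d x i"
proof -
  let ?F = "(\<lambda>k. c k * x + d k) ` {..<n}"
  have "Max ?F \<in> ?F" using assms by (intro Max_in) auto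
  then obtain i where i: "i < n" "Max ?F = c i * x + d i" by auto
  have "\<forall>j<n. c j * x + d j \<le> c i * x + d i" using i(2)[symmetric] by (auto intro: Max_ge)
  then show ?thesis using i by (auto simp: isMax_def)
qed

lemma lemmaA:
  assumes "0 < n" "p < q" "\<forall>x. p < x \<and> x < q \<longrightarrow> \<not> bad n c d x"
  shows "\<exists>g. \<forall>x\<in>{p..q}. isMax n c d x g"
proof -
  define m where "m = (p+q)/2"
  have pm: "p < m" "m < q" using assms by (auto simp: m_def)
  obtain g where g: "isMax n c d m g" using ex_isMax assms by blast
  have "isMax n c d x g" if "x \<in> {p..q}" for x
  proof -
    consider "x = m" | "m < x" | "x < m" by linarith
    then show ?thesis
    proof cases
      case 1 then show ?thesis using g by simp
    next
      case 2 then show ?thesis using prop_right[OF g 2] assms(3) pm that by auto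
    next
      case 3 then show ?thesis using prop_left[OF g 3] assms(3) pm that by auto
    qed
  qed
  then show ?thesis by blast
qed


definition phi :: "nat \<Rightarrow> (nat \<Rightarrow> real) \<Rightarrow> (nat \<Rightarrow> real) \<Rightarrow> real \<Rightarrow> nat" where
  "phi n c d x = (SOME i. isMax n c d x i \<and> (\<forall>j. isMax n c d x j \<longrightarrow> c i \<le> c j))"

lemma isMax_eq: "isMax n c d x i \<Longrightarrow> isMax n c d x j \<Longrightarrow> c i * x + d i = c j * x + d j"
  by (auto simp: isMax_def intro: order.antisym)

lemma phi_spec:
  assumes "bad n c d x"
  shows "isMax n c d x (phi n c d x)" "\<forall>j. isMax n c d x j \<longrightarrow> c (phi n c d x) \<le> c j"
    "\<exists>j. isMax n c d x j \<and> c (phi n c d x) < c j"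
proof -
  define A where "A = {j. isMax n c d x j}"
  have finA: "finite A" by (rule finite_subset[of _ "{..<n}"]) (auto simp: A_def isMax_def)
  obtain i1 j1 where ij: "isMax n c d x i1" "isMax n c d x j1" "c i1 \<noteq> c j1" using assms by (auto simp: bad_def)
  have "Min (c ` A) \<in> c ` A" using finA ij by (intro Min_in) (auto simp: A_def)
  then obtain i where i: "i \<in> A" "c i = Min (c ` A)" by auto
  have "\<forall>j. isMax n c d x j \<longrightarrow> c i \<le> c j" using i finA by (auto simp: A_def)
  then have ex: "\<exists>i. isMax n c d x i \<and> (\<forall>j. isMax n c d x j \<longrightarrow> c i \<le> c j)" using i by (auto simp: A_def)
  show 1: "isMax n c d x (phi n c d x)" "\<forall>j. isMax n c d x j \<longrightarrow> c (phi n c d x) \<le> c j"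
    using someI_ex[OF ex] by (auto simp: phi_def)
  show "\<exists>j. isMax n c d x j \<and> c (phi n c d x) < c j"
    using 1 ij by (metis order_le_less)
qed

lemma phi_neq:
  assumes "bad n c d x" "bad n c d y" "x < y"
  shows "phi n c d x \<noteq> phi n c d y"
proof
  assume eq: "phi n c d x = phi n c d y"
  define i where "i = phi n c d x"
  obtain g where g: "isMax n c d x g" "c i < c g" using phi_spec(3)[OF assms(1)] by (auto simp: i_def)
  have ix: "isMax n c d x i" using phi_spec(1)[OF assms(1)] by (simp add: i_def)
  have iy: "isMax n c d y i" using phi_spec(1)[OF assms(2)] eq by (simp add: i_def)
  have e: "c g * x + d g = c i * x + d i" using isMax_eq[OF g(1) ix] .
  have "c g * y + d g \<le> c i * y + d i" using iy g by (auto simp: isMax_def)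
  moreover have "(c g - c i) * (y - x) > 0" using g assms by simp
  ultimately show False using e by (simp add: algebra_simps)
qed

lemma inj_phi: "inj_on (phi n c d) {x. bad n c d x}"
  by (rule inj_onI) (metis linorder_neq_iff mem_Collect_eq phi_neq)

lemma phi_disj:
  assumes x: "bad n c d x" and y: "bad n (\<lambda>k. - c k) (\<lambda>k. - d k) y"
  shows "phi n c d x \<noteq> phi n (\<lambda>k. - c k) (\<lambda>k. - d k) y"
proof
  assume eq: "phi n c d x = phi n (\<lambda>k. - c k) (\<lambda>k. - d k) y"
  define i where "i = phi n c d x"
  obtain g where g: "isMax n c d x g" "c i < c g" using phi_spec(3)[OF x] by (auto simp: i_def)
  have ix: "isMax n c d x i" using phi_spec(1)[OF x] by (simp add: i_def)
  have imin: "i < n" "\<forall>j<n. c i * y + d i \<le> c j * y + d j"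
    using phi_spec(1)[OF y] eq by (auto simp: i_def isMax_def)
  obtain h where h: "isMax n (\<lambda>k. - c k) (\<lambda>k. - d k) y h" "- c i < - c h"
    using phi_spec(3)[OF y] eq by (auto simp: i_def)
  have hmin: "h < n" "\<forall>j<n. c h * y + d h \<le> c j * y + d j" using h(1) by (auto simp: isMax_def)
  have ehy: "c h * y + d h = c i * y + d i" using hmin imin by (meson order.antisym)
  have gn: "g < n" using g by (simp add: isMax_def)
  have egx: "c g * x + d g = c i * x + d i" using isMax_eq[OF g(1) ix] .
  consider "x < y" | "y < x" | "x = y" by linarith
  then show False
  proof cases
    case 1
    have "c h * x + d h \<le> c i * x + d i" using ix hmin by (auto simp: isMax_def)
    moreover have "(c i - c h) * (y - x) > 0" using h 1 by simp
    ultimately show False using ehy by (simp add: algebra_simps)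
  next
    case 2
    have "c i * y + d i \<le> c g * y + d g" using imin gn by auto
    moreover have "(c g - c i) * (x - y) > 0" using g 2 by simp
    ultimately show False using egx by (simp add: algebra_simps)
  next
    case 3
    have "isMax n c d x h"
      unfolding isMax_def
    proof (intro conjI allI impI)
      show "h < n" by (fact hmin(1))
      fix j assume "j < n"
      then have "c j * x + d j \<le> c i * x + d i" using ix by (auto simp: isMax_def)
      then show "c j * x + d j \<le> c h * x + d h" using ehy 3 by simp
    qed
    then have "c i \<le> c h" using phi_spec(2)[OF x] by (auto simp: i_def)
    then show False using h by simp
  qed
qed

lemma card_bad:
  fixes a b :: real and n :: nat and c d :: "nat \<Rightarrow> real"
  defines "BU \<equiv> {x. a < x \<and> x < b \<and> bad n c d x}"
    and "BL \<equiv> {x. a < x \<and> x < b \<and> bad n (\<lambda>k. - c k) (\<lambda>k. - d k) x}"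
  shows "finite BU" "finite BL" "card BU + card BL \<le> n"
proof -
  have iU: "inj_on (phi n c d) BU" using inj_phi by (rule inj_on_subset) (auto simp: BU_def)
  have iL: "inj_on (phi n (\<lambda>k. - c k) (\<lambda>k. - d k)) BL" using inj_phi by (rule inj_on_subset) (auto simp: BL_def)
  have sU: "phi n c d ` BU \<subseteq> {..<n}" using phi_spec(1) by (auto simp: BU_def isMax_def)
  have sL: "phi n (\<lambda>k. - c k) (\<lambda>k. - d k) ` BL \<subseteq> {..<n}" using phi_spec(1) by (auto simp: BL_def isMax_def)
  have fU: "finite (phi n c d ` BU)" using sU finite_subset by blast
  have fL: "finite (phi n (\<lambda>k. - c k) (\<lambda>k. - d k) ` BL)" using sL finite_subset by blast
  show "finite BU" using fU iU finite_imageD by blast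
  show "finite BL" using fL iL finite_imageD by blast
  have dj: "phi n c d ` BU \<inter> phi n (\<lambda>k. - c k) (\<lambda>k. - d k) ` BL = {}"
    using phi_disj by (fastforce simp: BU_def BL_def)
  have "card BU + card BL = card (phi n c d ` BU) + card (phi n (\<lambda>k. - c k) (\<lambda>k. - d k) ` BL)"
    using card_image iU iL by metis
  also have "\<dots> = card (phi n c d ` BU \<union> phi n (\<lambda>k. - c k) (\<lambda>k. - d k) ` BL)"
    using card_Un_disjoint fU fL dj by metis
  also have "\<dots> \<le> card {..<n}" using sU sL by (intro card_mono) auto
  finally show "card BU + card BL \<le> n" by simp
qed


lemma interval_bound:
  fixes n :: nat and traj :: "nat \<Rightarrow> real \<Rightarrow> real" and a b :: real
  assumes n: "n \<ge> 1" and ab: "a < b" and aff: "\<forall>k<n. affine_on (traj k) {a..b}"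
  shows "elem_intervals (ideal_traj n traj) a b \<le> n + 2"
proof -
  have "\<forall>k. \<exists>p. k < n \<longrightarrow> (\<forall>x\<in>{a..b}. traj k x = fst p * x + snd p)"
    using aff by (auto simp: affine_on_def)
  then obtain P where P: "\<And>k x. k < n \<Longrightarrow> x \<in> {a..b} \<Longrightarrow> traj k x = fst (P k) * x + snd (P k)"
    by metis
  define c where "c k = fst (P k)" for k
  define d where "d k = snd (P k)" for k
  have cd: "\<And>k x. k < n \<Longrightarrow> x \<in> {a..b} \<Longrightarrow> traj k x = c k * x + d k" using P by (simp add: c_def d_def)
  have up: "upper_env n traj x = c g * x + d g" if "x \<in> {a..b}" "isMax n c d x g" for x g
    unfolding upper_env_def
    by (rule Max_eqI) (use that cd in \<open>auto simp: isMax_def\<close>)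
  have lo: "lower_env n traj x = c h * x + d h"
    if "x \<in> {a..b}" "isMax n (\<lambda>k. - c k) (\<lambda>k. - d k) x h" for x h
    unfolding lower_env_def
    by (rule Min_eqI) (use that cd in \<open>auto simp: isMax_def\<close>)
  define BU where "BU = {x. a < x \<and> x < b \<and> bad n c d x}"
  define BL where "BL = {x. a < x \<and> x < b \<and> bad n (\<lambda>k. - c k) (\<lambda>k. - d k) x}"
  have fBU: "finite BU" and fBL: "finite BL" and cB: "card BU + card BL \<le> n"
    using card_bad[of a b n c d] by (simp_all add: BU_def BL_def)
  define S where "S = {a, b} \<union> BU \<union> BL"
  have fS: "finite S" using fBU fBL by (simp add: S_def)
  have Sab: "S \<subseteq> {a..b}" using ab by (auto simp: S_def BU_def BL_def)
  have cS: "card S \<le> n + 2"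
  proof -
    have "card S \<le> card {a,b} + card BU + card BL"
      unfolding S_def by (meson card_Un_le add_le_mono order_trans le_refl)
    also have "\<dots> \<le> 2 + card BU + card BL" by (simp add: card_insert_le_m1)
    finally show ?thesis using cB by simp
  qed
  define xs where "xs = sorted_list_of_set S"
  have sx: "set xs = S" using fS by (simp add: xs_def)
  have lx: "length xs = card S" by (simp add: xs_def)
  have ss: "sorted_wrt (<) xs" by (simp add: xs_def strict_sorted_list_of_set)
  have srt: "sorted xs" by (simp add: xs_def)
  have c2: "card S \<ge> 2"
  proof -
    have "card {a,b} \<le> card S" using fS by (intro card_mono) (auto simp: S_def)
    then show ?thesis using ab by simp
  qed
  define k where "k = card S - 1"
  define s where "s j = xs ! j" for j
  have s_S: "s j \<in> S" if "j \<le> k" for j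
  proof -
    have "j < length xs" using that c2 lx by (simp add: k_def)
    then show ?thesis using sx by (auto simp: s_def)
  qed
  have s_in: "s j \<in> {a..b}" if "j \<le> k" for j using s_S[OF that] Sab by blast
  have kl: "k < length xs" using c2 lx by (simp add: k_def)
  have s0: "s 0 = a"
  proof -
    have "a \<in> set xs" using sx by (simp add: S_def)
    then obtain i where i: "i < length xs" "xs ! i = a" by (auto simp: in_set_conv_nth)
    have "s 0 \<le> a" using sorted_nth_mono[OF srt, of 0 i] i by (simp add: s_def)
    moreover have "a \<le> s 0" using s_in[of 0] by simp
    ultimately show ?thesis by simp
  qed
  have sk: "s k = b"
  proof -
    have "b \<in> set xs" using sx by (simp add: S_def)
    then obtain i where i: "i < length xs" "xs ! i = b" by (auto simp: in_set_conv_nth)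
    have "b \<le> s k" using sorted_nth_mono[OF srt, of i k] i kl by (simp add: s_def k_def lx)
    moreover have "s k \<le> b" using s_in[of k] by simp
    ultimately show ?thesis by simp
  qed
  have sinc: "s j < s (Suc j)" if "j < k" for j
    using sorted_wrt_nth_less[OF ss, of j "Suc j"] that kl by (simp add: s_def)
  have gap: "y \<notin> S" if "j < k" "s j < y" "y < s (Suc j)" for j y
  proof
    assume "y \<in> S"
    then obtain i where i: "i < length xs" "xs ! i = y" using sx by (auto simp: in_set_conv_nth)
    show False
    proof (cases "i \<le> j")
      case True
      then have "xs ! i \<le> xs ! j" using sorted_nth_mono[OF srt, of i j] that kl by simp
      then show False using i that by (simp add: s_def)
    next
      case False
      then have "xs ! Suc j \<le> xs ! i" using sorted_nth_mono[OF srt, of "Suc j" i] i by simp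
      then show False using i that by (simp add: s_def)
    qed
  qed
  have affj: "affine_on (ideal_traj n traj) {s j..s (Suc j)}" if j: "j < k" for j
  proof -
    have sub: "{s j..s (Suc j)} \<subseteq> {a..b}" using s_in[of j] s_in[of "Suc j"] j by auto
    have nbU: "\<forall>x. s j < x \<and> x < s (Suc j) \<longrightarrow> \<not> bad n c d x"
    proof (intro allI impI)
      fix x assume x: "s j < x \<and> x < s (Suc j)"
      then have "x \<notin> S" using gap j by blast
      moreover have "a < x" "x < b" using x s_in[of j] s_in[of "Suc j"] j by auto
      ultimately show "\<not> bad n c d x" by (auto simp: S_def BU_def)
    qed
    have nbL: "\<forall>x. s j < x \<and> x < s (Suc j) \<longrightarrow> \<not> bad n (\<lambda>k. - c k) (\<lambda>k. - d k) x"
    proof (intro allI impI)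
      fix x assume x: "s j < x \<and> x < s (Suc j)"
      then have "x \<notin> S" using gap j by blast
      moreover have "a < x" "x < b" using x s_in[of j] s_in[of "Suc j"] j by auto
      ultimately show "\<not> bad n (\<lambda>k. - c k) (\<lambda>k. - d k) x" by (auto simp: S_def BL_def)
    qed
    obtain g where g: "\<forall>x\<in>{s j..s (Suc j)}. isMax n c d x g"
      using lemmaA[of n "s j" "s (Suc j)" c d] n sinc[OF j] nbU by auto
    obtain h where h: "\<forall>x\<in>{s j..s (Suc j)}. isMax n (\<lambda>k. - c k) (\<lambda>k. - d k) x h"
      using lemmaA[of n "s j" "s (Suc j)" "\<lambda>k. - c k" "\<lambda>k. - d k"] n sinc[OF j] nbL by auto
    have "\<forall>x\<in>{s j..s (Suc j)}. ideal_traj n traj x = ((c g + c h)/2) * x + (d g + d h)/2"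
    proof
      fix x assume x: "x \<in> {s j..s (Suc j)}"
      have "upper_env n traj x = c g * x + d g" using up[of x g] g x sub by blast
      moreover have "lower_env n traj x = c h * x + d h" using lo[of x h] h x sub by blast
      ultimately show "ideal_traj n traj x = ((c g + c h)/2) * x + (d g + d h)/2"
        by (simp add: ideal_traj_def field_simps)
    qed
    then show ?thesis unfolding affine_on_def by blast
  qed
  have "elem_intervals (ideal_traj n traj) a b \<le> k"
    unfolding elem_intervals_def
    by (rule Least_le) (use s0 sk sinc affj in blast)
  then show ?thesis using cS by (simp add: k_def)
qed

theorem mainTheorem1:
  fixes n \<tau> :: nat and t :: "nat \<Rightarrow> real" and traj :: "nat \<Rightarrow> real \<Rightarrow> real"
  assumes "n \<ge> 1"
    and "\<And>i. i < \<tau> \<Longrightarrow> t i < t (Suc i)"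
    and "\<And>k i. k < n \<Longrightarrow> i < \<tau> \<Longrightarrow> affine_on (traj k) {t i..t (Suc i)}"
  shows "(\<Sum>i<\<tau>. elem_intervals (ideal_traj n traj) (t i) (t (Suc i))) \<le> \<tau> * (n + 2)"
proof -
  have "(\<Sum>i<\<tau>. elem_intervals (ideal_traj n traj) (t i) (t (Suc i))) \<le> (\<Sum>i<\<tau>. n + 2)"
    by (rule sum_mono) (use interval_bound assms in auto)
  then show ?thesis by simp
qed

end
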